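(* Suppose Assumption 1 (context) holds. For any $u,v\in\mathbb{D}$ and any $j\in\{1,\dots,\widehat n\}$ such that $u_i=v_i$ for all $i\ne j$, we have $|\nabla_jd(u)-\nabla_jd(v)|\le L_j\|u-v\|$, where $L_j=\frac{\|A_j\|^2}{n^2\mu}$ if $j\le n$, $L_j=\frac{\|B_{j-n,:}\|^2}{\mu}$ if $n<j\le n+p$, and $L_j=\frac{L_{g_{j-n-p}}^2}{\mu}$ if $j>n+p$.
   Context: Integers $n,t\ge1$, $p,m\ge0$; $A\in\mathbb{R}^{t\times n}$ with columns $A_j$; $B\in\mathbb{R}^{p\times t}$ with rows $B_{j,:}$; $b\in\mathbb{R}^p$; $f:\mathbb{R}^t\to\mathbb{R}$; $g_i:\mathbb{R}^t\to\mathbb{R}$ ($i\le m$). Assumption 1 includes: $f$ is $\mu$-strongly convex ($\mu>0$); each $g_i$ is convex and every subgradient of $g_i$ has norm at most $L_{g_i}$ (plus convex $M$-Lipschitz loss functions, a Slater point, and finite optimal value for the associated constrained problem). $\widehat n=n+p+m$, $\mathbb{D}=\{u\in\mathbb{R}^{\widehat n}:u_{n+p+1},\dots,u_{\widehat n}\ge0\}$. For $u\in\mathbb{D}$: $L_f(x,u)=f(x)+\langle u_{1:n},A^Tx/n\rangle+\langle u_{n+1:n+p},Bx+b\rangle+\sum_{i=1}^mu_{n+p+i}g_i(x)$, $x^*(u)=\arg\min_xL_f(x,u)$ (unique), $d(u)=-L_f(x^*(u),u)$, which is differentiable on $\mathbb{D}$ with $\nabla d(u)=-[(A^Tx^*(u)/n)^T,(Bx^*(u)+b)^T,g_1(x^*(u)),\dots,g_m(x^*(u))]^T$;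 $\nabla_jd(u)$ is its $j$-th entry. *)

theory Defs
  imports "HOL-Analysis.Analysis"
begin

text \<open>Vectors of R^t are modelled as real^'t. Dual variables u in R^(n+p+m)
  are modelled as functions nat => real, of which only the entries 1..n+p+m
  (1-based, as in the paper) are relevant.\<close>

definition strongly_convex :: "real \<Rightarrow> ('a::real_normed_vector \<Rightarrow> real) \<Rightarrow> bool" where
  "strongly_convex \<mu> f \<longleftrightarrow>
     (\<forall>x y \<theta>. 0 \<le> \<theta> \<and> \<theta> \<le> 1 \<longrightarrow>
        f (\<theta> *\<^sub>R x + (1 - \<theta>) *\<^sub>R y)
          \<le> \<theta> * f x + (1 - \<theta>) * f y - \<mu> / 2 * \<theta> * (1 - \<theta>) * (norm (x - y))\<^sup>2)"

definition is_subgradient :: "('a::real_inner \<Rightarrow> real) \<Rightarrow> 'a \<Rightarrow> 'a \<Rightarrow> bool" where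
  "is_subgradient g x s \<longleftrightarrow> (\<forall>y. g y \<ge> g x + inner s (y - x))"

definition dual_dom :: "nat \<Rightarrow> nat \<Rightarrow> nat \<Rightarrow> (nat \<Rightarrow> real) set" where
  "dual_dom n p m = {u. \<forall>i. n + p < i \<and> i \<le> n + p + m \<longrightarrow> u i \<ge> 0}"

text \<open>Lagrangian L_f(x,u). A j (1<=j<=n) is the j-th column of A,
  Brow j (1<=j<=p) is the j-th row of B, b j the j-th entry of b, g i the i-th constraint.\<close>
definition lagr ::
  "nat \<Rightarrow> nat \<Rightarrow> nat \<Rightarrow> (nat \<Rightarrow> real^'t) \<Rightarrow> (nat \<Rightarrow> real^'t) \<Rightarrow> (nat \<Rightarrow> real)
   \<Rightarrow> (real^'t \<Rightarrow> real) \<Rightarrow> (nat \<Rightarrow> real^'t \<Rightarrow> real) \<Rightarrow> real^'t \<Rightarrow> (nat \<Rightarrow> real) \<Rightarrow> real" where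
  "lagr n p m A Brow b f g x u =
     f x + (\<Sum>j=1..n. u j * (inner (A j) x / real n))
         + (\<Sum>j=1..p. u (n + j) * (inner (Brow j) x + b j))
         + (\<Sum>i=1..m. u (n + p + i) * g i x)"

text \<open>x*(u) = argmin_x L_f(x,u) (unique under Assumption 1).\<close>
definition xstar ::
  "nat \<Rightarrow> nat \<Rightarrow> nat \<Rightarrow> (nat \<Rightarrow> real^'t) \<Rightarrow> (nat \<Rightarrow> real^'t) \<Rightarrow> (nat \<Rightarrow> real)
   \<Rightarrow> (real^'t \<Rightarrow> real) \<Rightarrow> (nat \<Rightarrow> real^'t \<Rightarrow> real) \<Rightarrow> (nat \<Rightarrow> real) \<Rightarrow> real^'t" where
  "xstar n p m A Brow b f g u =
     (THE x. \<forall>y. lagr n p m A Brow b f g x u \<le> lagr n p m A Brow b f g y u)"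

definition dual_fun ::
  "nat \<Rightarrow> nat \<Rightarrow> nat \<Rightarrow> (nat \<Rightarrow> real^'t) \<Rightarrow> (nat \<Rightarrow> real^'t) \<Rightarrow> (nat \<Rightarrow> real)
   \<Rightarrow> (real^'t \<Rightarrow> real) \<Rightarrow> (nat \<Rightarrow> real^'t \<Rightarrow> real) \<Rightarrow> (nat \<Rightarrow> real) \<Rightarrow> real" where
  "dual_fun n p m A Brow b f g u = - lagr n p m A Brow b f g (xstar n p m A Brow b f g u) u"

definition grad_d ::
  "nat \<Rightarrow> nat \<Rightarrow> nat \<Rightarrow> (nat \<Rightarrow> real^'t) \<Rightarrow> (nat \<Rightarrow> real^'t) \<Rightarrow> (nat \<Rightarrow> real)
   \<Rightarrow> (real^'t \<Rightarrow> real) \<Rightarrow> (nat \<Rightarrow> real^'t \<Rightarrow> real) \<Rightarrow> (nat \<Rightarrow> real) \<Rightarrow> nat \<Rightarrow> real" where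
  "grad_d n p m A Brow b f g u j =
     (let x = xstar n p m A Brow b f g u in
      if j \<le> n then - (inner (A j) x / real n)
      else if j \<le> n + p then - (inner (Brow (j - n)) x + b (j - n))
      else - g (j - n - p) x)"

definition vnorm :: "nat \<Rightarrow> (nat \<Rightarrow> real) \<Rightarrow> real" where
  "vnorm N u = sqrt (\<Sum>i=1..N. (u i)\<^sup>2)"

end

theory Submission
  imports Defs
begin


lemma convex_on_sum_fun:
  assumes "finite I" "convex S" "\<And>i. i \<in> I \<Longrightarrow> convex_on S (F i)"
  shows "convex_on S (\<lambda>x. \<Sum>i\<in>I. F i x)"
  using assms(1,3)
proof (induction I rule: finite_induct)
  case empty then show ?case using assms(2) by (simp add: convex_on_const)
next
  case (insert i I) then show ?case by (simp add: convex_on_add)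
qed

lemma convex_on_affine_inner:
  "convex_on UNIV (\<lambda>x::'a::real_inner. c * (inner a x + k))"
proof (rule convex_onI)
  fix t :: real and x y :: 'a assume "t > 0" "t < 1"
  show "c * (inner a ((1 - t) *\<^sub>R x + t *\<^sub>R y) + k) \<le> (1 - t) * (c * (inner a x + k)) + t * (c * (inner a y + k))"
    by (simp add: inner_add_right algebra_simps)
qed simp

lemma sc_convex:
  fixes F :: "'a::real_normed_vector \<Rightarrow> real"
  assumes "strongly_convex \<mu> F" "\<mu> \<ge> 0"
  shows "convex_on UNIV F"
proof (rule convex_onI)
  fix t :: real and x y assume t: "t > 0" "t < 1"
  have "F (t *\<^sub>R y + (1 - t) *\<^sub>R x) \<le> t * F y + (1 - t) * F x - \<mu> / 2 * t * (1 - t) * (norm (y - x))\<^sup>2"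
    using assms(1) t unfolding strongly_convex_def by auto
  moreover have "\<mu> / 2 * t * (1 - t) * (norm (y - x))\<^sup>2 \<ge> 0" using t assms(2) by simp
  ultimately show "F ((1 - t) *\<^sub>R x + t *\<^sub>R y) \<le> (1 - t) * F x + t * F y"
    by (simp add: add.commute)
qed simp

lemma sc_add:
  fixes F G :: "'a::real_normed_vector \<Rightarrow> real"
  assumes "strongly_convex \<mu> F" "convex_on UNIV G"
  shows "strongly_convex \<mu> (\<lambda>x. F x + G x)"
  unfolding strongly_convex_def
proof (intro allI impI)
  fix x y and t :: real assume t: "0 \<le> t \<and> t \<le> 1"
  have 1: "F (t *\<^sub>R x + (1 - t) *\<^sub>R y) \<le> t * F x + (1 - t) * F y - \<mu> / 2 * t * (1 - t) * (norm (x - y))\<^sup>2"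
    using assms(1) t unfolding strongly_convex_def by auto
  have 2: "G ((1 - (1-t)) *\<^sub>R x + (1-t) *\<^sub>R y) \<le> (1 - (1-t)) * G x + (1-t) * G y"
    using convex_onD[OF assms(2), of "1-t" x y] t by auto
  show "F (t *\<^sub>R x + (1 - t) *\<^sub>R y) + G (t *\<^sub>R x + (1 - t) *\<^sub>R y)
         \<le> t * (F x + G x) + (1 - t) * (F y + G y) - \<mu> / 2 * t * (1 - t) * (norm (x - y))\<^sup>2"
    using 1 2 by (simp add: algebra_simps)
qed

lemma subgrad_exists:
  fixes F :: "'a::euclidean_space \<Rightarrow> real"
  assumes "convex_on UNIV F"
  shows "\<exists>s. \<forall>y. F y \<ge> F x + inner s (y - x)"
proof -
  let ?S = "epigraph UNIV F"
  have cS: "convex ?S" using assms by (rule convex_epigraphI)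
  have xS: "(x, F x) \<in> ?S" by (simp add: epigraph_def)
  have nri: "(x, F x) \<notin> rel_interior ?S"
  proof
    assume "(x, F x) \<in> rel_interior ?S"
    then obtain e where e: "0 < e" "cball (x, F x) e \<inter> affine hull ?S \<subseteq> ?S"
      by (force simp: rel_interior_cball)
    have p1: "(x, F x + 1) \<in> ?S" by (simp add: epigraph_def)
    have "(1 + e) *\<^sub>R (x, F x) + (- e) *\<^sub>R (x, F x + 1) \<in> affine hull ?S"
      by (rule mem_affine[OF affine_affine_hull hull_inc[OF xS] hull_inc[OF p1]]) simp
    moreover have "(1 + e) *\<^sub>R (x, F x) + (- e) *\<^sub>R (x, F x + 1) = (x, F x - e)"
      by (simp add: algebra_simps)
    moreover have "(x, F x - e) \<in> cball (x, F x) e"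
      using e(1) by (simp add: dist_Pair_Pair dist_real_def)
    ultimately have "(x, F x - e) \<in> ?S" using e(2) by auto
    then show False using e(1) by (simp add: epigraph_def)
  qed
  obtain a where a: "a \<noteq> 0" "\<And>y. y \<in> ?S \<Longrightarrow> a \<bullet> (x, F x) \<le> a \<bullet> y"
    using supporting_hyperplane_rel_boundary[OF cS xS nri] by metis
  obtain a1 a2 where a12: "a = (a1, a2)" by (cases a)
  have ineq: "a1 \<bullet> x + a2 * F x \<le> a1 \<bullet> y + a2 * r" if "F y \<le> r" for y r
    using a(2)[of "(y, r)"] that a12 by (simp add: epigraph_def inner_Pair)
  have a2pos: "a2 \<ge> 0"
  proof (rule ccontr)
    assume "\<not> a2 \<ge> 0"
    then have "a2 < 0" by simp
    have "a1 \<bullet> x + a2 * F x \<le> a1 \<bullet> x + a2 * (F x + 1)" using ineq[of x "F x + 1"] by simp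
    then show False using \<open>a2 < 0\<close> by (simp add: algebra_simps)
  qed
  have a2ne: "a2 \<noteq> 0"
  proof
    assume "a2 = 0"
    then have "a1 \<bullet> x \<le> a1 \<bullet> (x - a1)" using ineq[of "x - a1" "F (x - a1)"] by simp
    then have "a1 \<bullet> a1 \<le> 0" by (simp add: inner_diff_right)
    then have "a1 = 0" by (metis inner_gt_zero_iff not_le)
    then show False using a a12 \<open>a2 = 0\<close> by (simp add: zero_prod_def)
  qed
  have "F y \<ge> F x + inner (- (1/a2) *\<^sub>R a1) (y - x)" for y
  proof -
    have "a1 \<bullet> x + a2 * F x \<le> a1 \<bullet> y + a2 * F y" using ineq[of y "F y"] by simp
    then have "a2 * (F x - (1/a2) * (a1 \<bullet> (y - x))) \<le> a2 * F y"
      using a2ne by (simp add: algebra_simps inner_diff_right)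
    then have "F x - (1/a2) * (a1 \<bullet> (y - x)) \<le> F y"
      using a2pos a2ne by (simp add: mult_le_cancel_left)
    then show ?thesis by simp
  qed
  then show ?thesis by blast
qed


lemma sc_growth:
  fixes F :: "'a::real_normed_vector \<Rightarrow> real"
  assumes sc: "strongly_convex \<mu> F" and mn: "\<And>z. F x \<le> F z"
  shows "F y \<ge> F x + \<mu> / 2 * (norm (y - x))\<^sup>2"
proof (rule ccontr)
  define c where "c = \<mu> / 2 * (norm (y - x))\<^sup>2"
  define D where "D = F y - F x"
  assume "\<not> ?thesis"
  then have lt: "D < c" by (simp add: c_def D_def)
  have D0: "D \<ge> 0" using mn[of y] by (simp add: D_def)
  then have c0: "c > 0" using lt by linarith
  define t where "t = (c - D) / (2 * c)"
  have t0: "t > 0" using lt c0 by (simp add: t_def)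
  have t1: "t \<le> 1/2" using D0 c0 by (simp add: t_def field_simps)
  have "F (t *\<^sub>R y + (1 - t) *\<^sub>R x) \<le> t * F y + (1 - t) * F x - \<mu> / 2 * t * (1 - t) * (norm (y - x))\<^sup>2"
    using sc[unfolded strongly_convex_def, rule_format, of t y x] t0 t1 by simp
  moreover have "F x \<le> F (t *\<^sub>R y + (1 - t) *\<^sub>R x)" by (rule mn)
  ultimately have "F x \<le> t * F y + (1 - t) * F x - t * (1 - t) * c" 
    by (simp add: c_def mult.assoc mult.left_commute)
  then have "t * ((1 - t) * c) \<le> t * D" by (simp add: D_def algebra_simps)
  then have "(1 - t) * c \<le> D" using t0 by simp
  moreover have "(1 - t) * c = (c + D) / 2" using c0 by (simp add: t_def field_simps)
  ultimately have "c \<le> D" by simp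
  then show False using lt by simp
qed
lemma sc_min_exists:
  fixes F :: "'a::euclidean_space \<Rightarrow> real"
  assumes sc: "strongly_convex \<mu> F" and mu: "\<mu> > 0"
  shows "\<exists>x. \<forall>y. F x \<le> F y"
proof -
  have cv: "convex_on UNIV F" using sc_convex[OF sc] mu by simp
  then have cont: "continuous_on UNIV F" by (intro convex_on_continuous) auto
  obtain s where s: "\<And>y. F y \<ge> F 0 + inner s (y - 0)" using subgrad_exists[OF cv, of 0] by blast
  have grow: "F z \<ge> F 0 + inner s z + \<mu> / 4 * (norm z)\<^sup>2" for z
  proof -
    have "F ((1/2) *\<^sub>R z + (1 - 1/2) *\<^sub>R 0) \<le> (1/2) * F z + (1 - 1/2) * F 0 - \<mu> / 2 * (1/2) * (1 - 1/2) * (norm (z - 0))\<^sup>2"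
      using sc[unfolded strongly_convex_def, rule_format, of "1/2" z 0] by simp
    moreover have "F ((1/2) *\<^sub>R z) \<ge> F 0 + inner s ((1/2) *\<^sub>R z)" using s[of "(1/2) *\<^sub>R z"] by simp
    ultimately show ?thesis by (simp add: algebra_simps)
  qed
  define R where "R = 4 * norm s / \<mu> + 1"
  have "4 * norm s / \<mu> \<ge> 0" using mu by simp
  then have R0: "R > 0" unfolding R_def by linarith
  obtain x where x: "x \<in> cball 0 R" "\<And>y. y \<in> cball 0 R \<Longrightarrow> F x \<le> F y"
  proof -
    have "cball (0::'a) R \<noteq> {}" using R0 by simp
    moreover have "continuous_on (cball 0 R) F" using cont continuous_on_subset by blast
    ultimately have "\<exists>x\<in>cball 0 R. \<forall>y\<in>cball 0 R. F x \<le> F y"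
      using continuous_attains_inf[OF compact_cball] by blast
    then show ?thesis using that by blast
  qed
  have "F x \<le> F y" for y
  proof (cases "y \<in> cball 0 R")
    case True then show ?thesis using x by blast
  next
    case False
    then have ny: "norm y > R" by simp
    have "inner s y \<ge> - (norm s * norm y)" using Cauchy_Schwarz_ineq2[of s y] by linarith
    moreover have "\<mu> / 4 * (norm y)\<^sup>2 \<ge> norm s * norm y"
    proof -
      have "norm y \<ge> 4 * norm s / \<mu>" using ny R_def by simp
      then have "\<mu> / 4 * norm y \<ge> norm s" using mu by (simp add: field_simps)
      then have "\<mu> / 4 * norm y * norm y \<ge> norm s * norm y" using mult_right_mono[OF _ norm_ge_zero] by blast
      then show ?thesis by (simp add: power2_eq_square mult.assoc)
    qed
    ultimately have "F y \<ge> F 0" using grow[of y] by linarith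
    moreover have "F x \<le> F 0" using x(2)[of 0] R0 by simp
    ultimately show ?thesis by linarith
  qed
  then show ?thesis by blast
qed

lemma sc_the:
  fixes F :: "'a::euclidean_space \<Rightarrow> real"
  assumes sc: "strongly_convex \<mu> F" and mu: "\<mu> > 0"
  shows "F (THE x. \<forall>y. F x \<le> F y) \<le> F y"
proof -
  obtain x where x: "\<forall>y. F x \<le> F y" using sc_min_exists[OF sc mu] by blast
  have "\<exists>!x. \<forall>y. F x \<le> F y"
  proof (rule ex1I[of _ x])
    show "\<forall>y. F x \<le> F y" by fact
    fix z assume z: "\<forall>y. F z \<le> F y"
    have "F x \<ge> F z + \<mu> / 2 * (norm (x - z))\<^sup>2" using sc_growth[OF sc] z by blast
    moreover have "F z \<ge> F x" using x by blast
    ultimately have "\<mu> / 2 * (norm (x - z))\<^sup>2 \<le> 0" by linarith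
    moreover have "\<mu> / 2 > 0" using mu by simp
    ultimately have "(norm (x - z))\<^sup>2 \<le> 0" by (meson mult_le_0_iff not_le)
    then show "z = x" by simp
  qed
  then have "\<forall>y. F (THE x. \<forall>y. F x \<le> F y) \<le> F y" by (rule theI')
  then show ?thesis by blast
qed



lemma convex_on_inner_div:
  "convex_on UNIV (\<lambda>x::'a::real_inner. c * (inner a x / d))"
proof (rule convex_onI)
  fix t :: real and x y :: 'a assume "t > 0" "t < 1"
  show "c * (inner a ((1 - t) *\<^sub>R x + t *\<^sub>R y) / d) \<le> (1 - t) * (c * (inner a x / d)) + t * (c * (inner a y / d))"
    by (cases "d = 0") (simp_all add: inner_add_right inner_diff_right field_simps)
qed simp

lemma sum_one_diff:
  fixes u v a :: "_ \<Rightarrow> real"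
  assumes "finite S" "i0 \<in> S" "k i0 = j" "\<And>i. i \<in> S \<Longrightarrow> i \<noteq> i0 \<Longrightarrow> u (k i) = v (k i)"
  shows "(\<Sum>i\<in>S. u (k i) * a i) = (\<Sum>i\<in>S. v (k i) * a i) + (u j - v j) * a i0"
proof -
  have "(\<Sum>i\<in>S - {i0}. u (k i) * a i) = (\<Sum>i\<in>S - {i0}. v (k i) * a i)"
    using assms(4) by (intro sum.cong) auto
  then show ?thesis
    using sum.remove[OF assms(1,2), of "\<lambda>i. u (k i) * a i"] sum.remove[OF assms(1,2), of "\<lambda>i. v (k i) * a i"] assms(3)
    by (simp add: left_diff_distrib)
qed

lemma sum_no_diff:
  assumes "\<And>i. i \<in> S \<Longrightarrow> u (k i) = v (k i)"
  shows "(\<Sum>i\<in>S. u (k i) * a i) = (\<Sum>i\<in>S. v (k i) * a i)"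
  using assms by (intro sum.cong) auto

lemma core_bound:
  fixes x y :: "'a::real_normed_vector" and H :: "'a \<Rightarrow> real"
  assumes mu: "\<mu> > 0" and K0: "K \<ge> 0"
    and key: "\<delta> * (H y - H x) \<ge> \<mu> * (norm (x - y))\<^sup>2"
    and lip: "\<bar>H x - H y\<bar> \<le> K * norm (x - y)"
    and V: "\<bar>\<delta>\<bar> \<le> V"
  shows "\<bar>H x - H y\<bar> \<le> K\<^sup>2 / \<mu> * V"
proof (cases "norm (x - y) = 0")
  case True
  then have "\<bar>H x - H y\<bar> = 0" using lip by simp
  moreover have "K\<^sup>2 / \<mu> * V \<ge> 0" using mu V by simp
  ultimately show ?thesis by simp
next
  case False
  let ?r = "norm (x - y)"
  have r0: "?r > 0" using False by simp
  have "\<delta> * (H y - H x) \<le> \<bar>\<delta>\<bar> * \<bar>H x - H y\<bar>"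
    by (metis abs_ge_self abs_minus_commute abs_mult)
  also have "\<dots> \<le> \<bar>\<delta>\<bar> * (K * ?r)" using lip by (simp add: mult_left_mono)
  finally have "\<mu> * ?r * ?r \<le> (\<bar>\<delta>\<bar> * K) * ?r" using key by (simp add: power2_eq_square algebra_simps)
  then have "\<mu> * ?r \<le> \<bar>\<delta>\<bar> * K" using r0 by simp
  then have rb: "?r \<le> \<bar>\<delta>\<bar> * K / \<mu>" using mu by (simp add: field_simps)
  have "\<bar>H x - H y\<bar> \<le> K * ?r" by (rule lip)
  also have "\<dots> \<le> K * (\<bar>\<delta>\<bar> * K / \<mu>)" using mult_left_mono[OF rb K0] by simp
  also have "\<dots> = K\<^sup>2 / \<mu> * \<bar>\<delta>\<bar>" by (simp add: power2_eq_square)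
  also have "\<dots> \<le> K\<^sup>2 / \<mu> * V" using V mu by (intro mult_left_mono) simp_all
  finally show ?thesis .
qed

lemma lip_from_subgrad:
  fixes G :: "'a::euclidean_space \<Rightarrow> real"
  assumes cv: "convex_on UNIV G" and bd: "\<And>x s. is_subgradient G x s \<Longrightarrow> norm s \<le> L"
  shows "\<bar>G x - G y\<bar> \<le> L * norm (x - y)" "L \<ge> 0"
proof -
  have one: "G x - G y \<le> L * norm (x - y)" for x y
  proof -
    obtain s where s: "\<forall>z. G z \<ge> G x + inner s (z - x)" using subgrad_exists[OF cv] by blast
    then have "is_subgradient G x s" by (simp add: is_subgradient_def)
    then have sL: "norm s \<le> L" by (rule bd)
    have "G x - G y \<le> inner s (x - y)" using s[rule_format, of y] by (simp add: inner_diff_right)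
    also have "\<dots> \<le> norm s * norm (x - y)" by (rule norm_cauchy_schwarz)
    also have "\<dots> \<le> L * norm (x - y)" using sL by (simp add: mult_right_mono)
    finally show ?thesis .
  qed
  show "\<bar>G x - G y\<bar> \<le> L * norm (x - y)"
    using one[of x y] one[of y x] by (simp add: norm_minus_commute abs_le_iff)
  obtain s where s: "\<forall>z. G z \<ge> G x + inner s (z - x)" using subgrad_exists[OF cv] by blast
  then have "is_subgradient G x s" by (simp add: is_subgradient_def)
  then have "norm s \<le> L" by (rule bd)
  then show "L \<ge> 0" using norm_ge_zero order_trans by blast
qed

lemma vnorm_ge:
  assumes "1 \<le> j" "j \<le> N"
  shows "\<bar>w j\<bar> \<le> vnorm N w"
proof -
  have "(w j)\<^sup>2 \<le> (\<Sum>i=1..N. (w i)\<^sup>2)"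
    using assms by (intro member_le_sum) auto
  then have "sqrt ((w j)\<^sup>2) \<le> vnorm N w" unfolding vnorm_def by (rule real_sqrt_le_mono)
  then show ?thesis by simp
qed



theorem lemma1:
  fixes n p m :: nat and \<mu> :: real
    and A Brow :: "nat \<Rightarrow> real^'t" and b :: "nat \<Rightarrow> real"
    and f :: "real^'t \<Rightarrow> real" and g :: "nat \<Rightarrow> real^'t \<Rightarrow> real" and Lg :: "nat \<Rightarrow> real"
    and u v :: "nat \<Rightarrow> real" and j :: nat
  assumes n_pos: "n \<ge> 1"
    and mu_pos: "\<mu> > 0"
    and f_sc: "strongly_convex \<mu> f"
    and g_convex: "\<And>i. 1 \<le> i \<Longrightarrow> i \<le> m \<Longrightarrow> convex_on UNIV (g i)"
    and g_subgrad: "\<And>i x s. 1 \<le> i \<Longrightarrow> i \<le> m \<Longrightarrow> is_subgradient (g i) x s \<Longrightarrow> norm s \<le> Lg i"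
    and u_dom: "u \<in> dual_dom n p m"
    and v_dom: "v \<in> dual_dom n p m"
    and j_range: "1 \<le> j" "j \<le> n + p + m"
    and same: "\<And>i. 1 \<le> i \<Longrightarrow> i \<le> n + p + m \<Longrightarrow> i \<noteq> j \<Longrightarrow> u i = v i"
  shows "\<bar>grad_d n p m A Brow b f g u j - grad_d n p m A Brow b f g v j\<bar>
         \<le> (if j \<le> n then (norm (A j))\<^sup>2 / ((real n)\<^sup>2 * \<mu>)
            else if j \<le> n + p then (norm (Brow (j - n)))\<^sup>2 / \<mu>
            else (Lg (j - n - p))\<^sup>2 / \<mu>) * vnorm (n + p + m) (\<lambda>i. u i - v i)"
proof -
  let ?L = "lagr n p m A Brow b f g"
  let ?xs = "xstar n p m A Brow b f g"
  have sc: "strongly_convex \<mu> (\<lambda>z. ?L z w)" if w: "w \<in> dual_dom n p m" for w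
  proof -
    let ?R = "\<lambda>z. (\<Sum>j=1..n. w j * (inner (A j) z / real n))
         + (\<Sum>j=1..p. w (n + j) * (inner (Brow j) z + b j))
         + (\<Sum>i=1..m. w (n + p + i) * g i z)"
    have c1: "convex_on UNIV (\<lambda>z. \<Sum>j=1..n. w j * (inner (A j) z / real n))"
      by (intro convex_on_sum_fun convex_on_inner_div) auto
    have c2: "convex_on UNIV (\<lambda>z. \<Sum>j=1..p. w (n + j) * (inner (Brow j) z + b j))"
      by (intro convex_on_sum_fun convex_on_affine_inner) auto
    have c3: "convex_on UNIV (\<lambda>z. \<Sum>i=1..m. w (n + p + i) * g i z)"
    proof (intro convex_on_sum_fun)
      fix i assume i: "i \<in> {1..m}"
      then have "w (n + p + i) \<ge> 0" using w by (auto simp: dual_dom_def)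
      then show "convex_on UNIV (\<lambda>z. w (n + p + i) * g i z)"
        using g_convex i by (intro convex_on_cmul) auto
    qed auto
    have "convex_on UNIV ?R" using c1 c2 c3 by (intro convex_on_add)
    then have "strongly_convex \<mu> (\<lambda>z. f z + ?R z)" using f_sc by (intro sc_add)
    moreover have "(\<lambda>z. ?L z w) = (\<lambda>z. f z + ?R z)" by (simp add: fun_eq_iff lagr_def add.assoc)
    ultimately show ?thesis by simp
  qed
  have mn: "?L (?xs w) w \<le> ?L y w" if w: "w \<in> dual_dom n p m" for w y
    unfolding xstar_def using sc_the[OF sc[OF w] mu_pos] .
  have gr: "?L y w \<ge> ?L (?xs w) w + \<mu> / 2 * (norm (y - ?xs w))\<^sup>2" if w: "w \<in> dual_dom n p m" for w y
    using sc_growth[OF sc[OF w]] mn[OF w] by blast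
  define H where "H = (\<lambda>z. if j \<le> n then inner (A j) z / real n
      else if j \<le> n + p then inner (Brow (j - n)) z + b (j - n) else g (j - n - p) z)"
  define \<delta> where "\<delta> = u j - v j"
  have diff: "?L z u = ?L z v + \<delta> * H z" for z
  proof -
    consider (a) "j \<le> n" | (b) "n < j" "j \<le> n + p" | (c) "n + p < j" by linarith
    then show ?thesis
    proof cases
      case a
      have s1: "(\<Sum>i=1..n. u i * (inner (A i) z / real n)) = (\<Sum>i=1..n. v i * (inner (A i) z / real n)) + (u j - v j) * (inner (A j) z / real n)"
        using sum_one_diff[of "{1..n}" j "\<lambda>i. i" j u v "\<lambda>i. inner (A i) z / real n"] same a j_range by auto
      have s2: "(\<Sum>i=1..p. u (n + i) * (inner (Brow i) z + b i)) = (\<Sum>i=1..p. v (n + i) * (inner (Brow i) z + b i))"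
        using sum_no_diff[of "{1..p}" u "\<lambda>i. n + i" v "\<lambda>i. inner (Brow i) z + b i"] same a by auto
      have s3: "(\<Sum>i=1..m. u (n + p + i) * g i z) = (\<Sum>i=1..m. v (n + p + i) * g i z)"
        using sum_no_diff[of "{1..m}" u "\<lambda>i. n + p + i" v "\<lambda>i. g i z"] same a by auto
      show ?thesis using a s1 s2 s3 by (simp add: lagr_def H_def \<delta>_def)
    next
      case b
      have s1: "(\<Sum>i=1..n. u i * (inner (A i) z / real n)) = (\<Sum>i=1..n. v i * (inner (A i) z / real n))"
        using sum_no_diff[of "{1..n}" u "\<lambda>i. i" v "\<lambda>i. inner (A i) z / real n"] same b by auto
      have s2: "(\<Sum>i=1..p. u (n + i) * (inner (Brow i) z + b i)) = (\<Sum>i=1..p. v (n + i) * (inner (Brow i) z + b i)) + (u j - v j) * (inner (Brow (j - n)) z + b (j - n))"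
        using sum_one_diff[of "{1..p}" "j - n" "\<lambda>i. n + i" j u v "\<lambda>i. inner (Brow i) z + b i"] same b by auto
      have s3: "(\<Sum>i=1..m. u (n + p + i) * g i z) = (\<Sum>i=1..m. v (n + p + i) * g i z)"
        using sum_no_diff[of "{1..m}" u "\<lambda>i. n + p + i" v "\<lambda>i. g i z"] same b by auto
      show ?thesis using b s1 s2 s3 by (simp add: lagr_def H_def \<delta>_def)
    next
      case c
      have s1: "(\<Sum>i=1..n. u i * (inner (A i) z / real n)) = (\<Sum>i=1..n. v i * (inner (A i) z / real n))"
        using sum_no_diff[of "{1..n}" u "\<lambda>i. i" v "\<lambda>i. inner (A i) z / real n"] same c by auto
      have s2: "(\<Sum>i=1..p. u (n + i) * (inner (Brow i) z + b i)) = (\<Sum>i=1..p. v (n + i) * (inner (Brow i) z + b i))"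
        using sum_no_diff[of "{1..p}" u "\<lambda>i. n + i" v "\<lambda>i. inner (Brow i) z + b i"] same c by auto
      have ij: "Suc 0 \<le> j - (n + p) \<and> j - (n + p) \<le> m" using c j_range by auto
      have s3: "(\<Sum>i=1..m. u (n + p + i) * g i z) = (\<Sum>i=1..m. v (n + p + i) * g i z) + (u j - v j) * g (j - n - p) z"
        using ij sum_one_diff[of "{1..m}" "j - n - p" "\<lambda>i. n + p + i" j u v "\<lambda>i. g i z"] same c j_range by auto
      show ?thesis using c s1 s2 s3 by (simp add: lagr_def H_def \<delta>_def)
    qed
  qed
  define x where "x = ?xs u"
  define y where "y = ?xs v"
  have gu: "?L y u \<ge> ?L x u + \<mu> / 2 * (norm (y - x))\<^sup>2" using gr[OF u_dom] x_def by blast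
  have gv: "?L x v \<ge> ?L y v + \<mu> / 2 * (norm (x - y))\<^sup>2" using gr[OF v_dom] y_def by blast
  have key: "\<delta> * (H y - H x) \<ge> \<mu> * (norm (x - y))\<^sup>2"
    using gu gv diff[of x] diff[of y] by (simp add: norm_minus_commute algebra_simps)
  define K where "K = (if j \<le> n then norm (A j) / real n else if j \<le> n + p then norm (Brow (j - n)) else Lg (j - n - p))"
  have lipK: "\<bar>H x - H y\<bar> \<le> K * norm (x - y) \<and> K \<ge> 0"
  proof -
    consider (a) "j \<le> n" | (b) "n < j" "j \<le> n + p" | (c) "n + p < j" by linarith
    then show ?thesis
    proof cases
      case a
      have "\<bar>inner (A j) x / real n - inner (A j) y / real n\<bar> = \<bar>inner (A j) (x - y)\<bar> / real n"
        using n_pos by (simp add: inner_diff_right abs_divide flip: diff_divide_distrib)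
      also have "\<dots> \<le> norm (A j) * norm (x - y) / real n"
        using Cauchy_Schwarz_ineq2 n_pos by (intro divide_right_mono) auto
      finally show ?thesis using a by (simp add: H_def K_def)
    next
      case b
      have "\<bar>(inner (Brow (j - n)) x + b (j - n)) - (inner (Brow (j - n)) y + b (j - n))\<bar> = \<bar>inner (Brow (j - n)) (x - y)\<bar>"
        by (simp add: inner_diff_right)
      also have "\<dots> \<le> norm (Brow (j - n)) * norm (x - y)" by (rule Cauchy_Schwarz_ineq2)
      finally show ?thesis using b by (simp add: H_def K_def)
    next
      case c
      have i: "1 \<le> j - n - p" "j - n - p \<le> m" using c j_range by auto
      have cv: "convex_on UNIV (g (j - n - p))" using g_convex i by blast
      have bd: "\<And>x s. is_subgradient (g (j - n - p)) x s \<Longrightarrow> norm s \<le> Lg (j - n - p)"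
        using g_subgrad i by blast
      show ?thesis using lip_from_subgrad(1)[OF cv bd, where x=x and y=y] lip_from_subgrad(2)[OF cv bd] c by (simp add: H_def K_def)
    qed
  qed
  have V: "\<bar>\<delta>\<bar> \<le> vnorm (n + p + m) (\<lambda>i. u i - v i)"
    using vnorm_ge[OF j_range, of "\<lambda>i. u i - v i"] by (simp add: \<delta>_def)
  have main: "\<bar>H x - H y\<bar> \<le> K\<^sup>2 / \<mu> * vnorm (n + p + m) (\<lambda>i. u i - v i)"
    using core_bound[OF mu_pos _ key _ V] lipK by blast
  have gd: "grad_d n p m A Brow b f g w j = - H (?xs w)" for w
    by (simp add: grad_d_def H_def Let_def)
  have coef: "K\<^sup>2 / \<mu> = (if j \<le> n then (norm (A j))\<^sup>2 / ((real n)\<^sup>2 * \<mu>)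
            else if j \<le> n + p then (norm (Brow (j - n)))\<^sup>2 / \<mu>
            else (Lg (j - n - p))\<^sup>2 / \<mu>)"
    by (simp add: K_def power_divide)
  show ?thesis using main gd[of u] gd[of v] coef x_def y_def by (simp add: abs_minus_commute)
qed


end
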